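(* Let $I$ be an inverse semigroup generated by $k$ elements, and suppose there is a surjective idempotent-pure morphism from $I$ onto a finite semigroup $J$ of cardinality $n$. Then $|I|\le n(2^{kn}-1)$. *)

theory Defs
  imports Main
begin

definition is_inverse_semigroup :: "'a::semigroup_mult itself \<Rightarrow> bool" where
  "is_inverse_semigroup _ \<longleftrightarrow>
     (\<forall>x::'a. \<exists>!y. x * y * x = x \<and> y * x * y = y)"

definition sinv :: "'a::semigroup_mult \<Rightarrow> 'a" where
  "sinv x = (THE y. x * y * x = x \<and> y * x * y = y)"

inductive_set inv_gen :: "'a::semigroup_mult set \<Rightarrow> 'a set" for G where
  gen: "x \<in> G \<Longrightarrow> x \<in> inv_gen G"
| inv: "x \<in> inv_gen G \<Longrightarrow> sinv x \<in> inv_gen G"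
| mult: "x \<in> inv_gen G \<Longrightarrow> y \<in> inv_gen G \<Longrightarrow> x * y \<in> inv_gen G"

definition semigroup_hom :: "('a::semigroup_mult \<Rightarrow> 'b::semigroup_mult) \<Rightarrow> bool" where
  "semigroup_hom f \<longleftrightarrow> (\<forall>x y. f (x * y) = f x * f y)"

definition idempotent_pure :: "('a::semigroup_mult \<Rightarrow> 'b::semigroup_mult) \<Rightarrow> bool" where
  "idempotent_pure f \<longleftrightarrow> (\<forall>x. f x * f x = f x \<longrightarrow> x * x = x)"

end

theory Submission
  imports Defs
begin

inductive_set wds :: "'a::semigroup_mult list \<Rightarrow> 'a set" for gs where
  l1: "i < length gs \<Longrightarrow> gs!i \<in> wds gs"
| l2: "i < length gs \<Longrightarrow> sinv (gs!i) \<in> wds gs"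
| s1: "x \<in> wds gs \<Longrightarrow> i < length gs \<Longrightarrow> x * gs!i \<in> wds gs"
| s2: "x \<in> wds gs \<Longrightarrow> i < length gs \<Longrightarrow> x * sinv (gs!i) \<in> wds gs"

locale setting =
  fixes f :: "'a::semigroup_mult \<Rightarrow> 'b::semigroup_mult" and gs :: "'a list"
  assumes inv: "\<forall>x::'a. \<exists>!y. x*y*x = x \<and> y*x*y = y"
    and hom: "\<And>x y. f (x*y) = f x * f y"
    and pure: "\<And>x. f x * f x = f x \<Longrightarrow> x*x = x"
begin

lemma sinv12: "(x::'a) * sinv x * x = x \<and> sinv x * x * sinv x = sinv x"
proof -
  have "\<exists>!y. (x::'a)*y*x = x \<and> y*x*y = y" by (rule spec[OF inv])
  from theI'[OF this] show ?thesis unfolding sinv_def .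
qed

lemma sinv1: "(x::'a) * (sinv x * x) = x" using sinv12[of x] by (simp only: mult.assoc)
lemma sinv2: "sinv (x::'a) * (x * sinv x) = sinv x" using sinv12[of x] by (simp only: mult.assoc)
lemma sinv1': "(x::'a) * (sinv x * (x * z)) = x * z" by (simp add: mult.assoc[symmetric] sinv12)
lemma sinv2': "sinv (x::'a) * (x * (sinv x * z)) = sinv x * z" by (simp add: mult.assoc[symmetric] sinv12)

lemma sinv_eq: "(x::'a)*y*x = x \<Longrightarrow> y*x*y = y \<Longrightarrow> sinv x = y"
proof -
  assume a: "x*y*x = x" "y*x*y = y"
  have "\<exists>!y. (x::'a)*y*x = x \<and> y*x*y = y" by (rule spec[OF inv])
  note ex = this
  show ?thesis unfolding sinv_def by (rule the1_equality[OF ex]) (use a in auto)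
qed

definition idem :: "'a \<Rightarrow> bool" where "idem e \<longleftrightarrow> e * e = e"

lemma idem': "idem e \<Longrightarrow> e * (e * z) = e * z"
  unfolding idem_def by (simp add: mult.assoc[symmetric])

lemma rext: "(a::'a) * b = c \<Longrightarrow> a * (b * z) = c * z" by (simp add: mult.assoc[symmetric])

lemma idem_comm_aux: assumes e: "idem e" and g: "idem g" shows "e * g * (e * g) = e * g"
proof -
  have ee: "e * (e * z) = e * z" for z using idem'[OF e] .
  have gg: "g * (g * z) = g * z" for z using idem'[OF g] .
  have e2: "e*e = e" and g2: "g*g = g" using e g unfolding idem_def by auto
  define x where "x = sinv (e*g)"
  have h1: "e*g*x*(e*g) = e*g" and h2: "x*(e*g)*x = x" using sinv12[of "e*g"] x_def by auto
  note h1' = rext[OF h1[simplified mult.assoc], simplified mult.assoc]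
  note h2' = rext[OF h2[simplified mult.assoc], simplified mult.assoc]
  have "sinv (e*g) = g*x*e"
  proof (rule sinv_eq)
    show "e * g * (g * x * e) * (e * g) = e * g"
      by (simp add: mult.assoc ee gg e2 g2 h1' h1[simplified mult.assoc])
    show "g * x * e * (e * g) * (g * x * e) = g * x * e"
      by (simp add: mult.assoc ee gg e2 g2 h2' h2[simplified mult.assoc])
  qed
  hence xx: "x = g*x*e" using x_def by simp
  have "x * x = x"
  proof -
    have "x * x = (g*x*e)*(g*x*e)" using xx by simp
    also have "\<dots> = g*(x*(e*g)*x)*e" by (simp add: mult.assoc)
    also have "\<dots> = x" using h2 xx by simp
    finally show ?thesis .
  qed
  hence "sinv x = x" by (intro sinv_eq) auto
  moreover have "sinv x = e*g" using h1 h2 by (intro sinv_eq) (auto simp: mult.assoc)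
  ultimately show ?thesis using \<open>x*x = x\<close> by simp
qed

lemma idem_comm: assumes e: "idem e" and g: "idem g" shows "e * g = g * e"
proof -
  have ee: "e * (e * z) = e * z" for z using idem'[OF e] .
  have gg: "g * (g * z) = g * z" for z using idem'[OF g] .
  have e2: "e*e = e" and g2: "g*g = g" using e g unfolding idem_def by auto
  have eg: "e * g * (e * g) = e * g" using idem_comm_aux[OF e g] .
  have ge: "g * e * (g * e) = g * e" using idem_comm_aux[OF g e] .
  note eg' = rext[OF eg[simplified mult.assoc], simplified mult.assoc]
  note ge' = rext[OF ge[simplified mult.assoc], simplified mult.assoc]
  have "sinv (e*g) = g*e"
    by (rule sinv_eq) (simp_all add: mult.assoc ee gg e2 g2 eg' ge' eg[simplified mult.assoc] ge[simplified mult.assoc])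
  moreover have "sinv (e*g) = e*g" using eg by (intro sinv_eq) auto
  ultimately show ?thesis by simp
qed


lemma idem_sinv: "idem e \<Longrightarrow> sinv e = e"
  by (rule sinv_eq) (simp_all add: idem_def)

lemma sinv_sinv: "sinv (sinv (x::'a)) = x"
  by (rule sinv_eq) (simp_all add: sinv12)

lemma idem_r: "idem (x * sinv x)"
  unfolding idem_def by (simp add: mult.assoc sinv2)

lemma idem_l: "idem (sinv x * x)"
  unfolding idem_def by (simp add: mult.assoc sinv1)

lemma sinv_mult: "sinv ((x::'a)*y) = sinv y * sinv x"
proof (rule sinv_eq)
  have c: "(y*sinv y)*(sinv x*x) = (sinv x*x)*(y*sinv y)" by (rule idem_comm[OF idem_r idem_l])
  have "x*y*(sinv y*sinv x)*(x*y) = x*((y*sinv y)*(sinv x*x))*y" by (simp only: mult.assoc)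
  also have "\<dots> = x*((sinv x*x)*(y*sinv y))*y" using c by simp
  also have "\<dots> = (x*sinv x*x)*(y*sinv y*y)" by (simp only: mult.assoc)
  also have "\<dots> = x*y" using sinv12 by simp
  finally show "x*y*(sinv y*sinv x)*(x*y) = x*y" .
  have "sinv y*sinv x*(x*y)*(sinv y*sinv x) = sinv y*((sinv x*x)*(y*sinv y))*sinv x" by (simp only: mult.assoc)
  also have "\<dots> = sinv y*((y*sinv y)*(sinv x*x))*sinv x" using c by simp
  also have "\<dots> = (sinv y*y*sinv y)*(sinv x*x*sinv x)" by (simp only: mult.assoc)
  also have "\<dots> = sinv y*sinv x" using sinv12 by simp
  finally show "sinv y*sinv x*(x*y)*(sinv y*sinv x) = sinv y*sinv x" .
qed

lemma compat: fixes s :: 'a assumes g: "idem (sinv s * t)" and r: "s * sinv s = t * sinv t" shows "s = t"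
proof -
  define g where "g = sinv s * t"
  have gg: "g * g = g" using assms g_def idem_def by simp
  have "sinv t * s = sinv g" unfolding g_def by (simp add: sinv_mult sinv_sinv)
  also have "\<dots> = g" using idem_sinv assms g_def by simp
  finally have tg: "sinv t * s = g" .
  have "s = s * sinv s * s" using sinv12 by simp
  also have "\<dots> = t * sinv t * s" using r by simp
  also have "\<dots> = t * (sinv t * s)" by (simp add: mult.assoc)
  finally have s1: "s = t * g" using tg by simp
  have "t = t * sinv t * t" using sinv12 by simp
  also have "\<dots> = s * sinv s * t" using r by simp
  also have "\<dots> = s * g" using g_def by (simp add: mult.assoc)
  finally have t1: "t = s * g" .
  have "s = s * g * g" using s1 t1 by simp
  also have "\<dots> = s * g" using gg by (simp add: mult.assoc)
  finally show ?thesis using t1 by simp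
qed

lemma idem_mult: "idem e \<Longrightarrow> idem g \<Longrightarrow> idem (e*g)"
proof -
  assume e: "idem e" and g: "idem g"
  have "e*g*(e*g) = e*(g*e)*g" by (simp add: mult.assoc)
  also have "\<dots> = e*(e*g)*g" using idem_comm[OF e g] by simp
  also have "\<dots> = (e*e)*(g*g)" by (simp add: mult.assoc)
  also have "\<dots> = e*g" using e g by (simp add: idem_def)
  finally show ?thesis unfolding idem_def .
qed

lemma idem_conj: assumes e: "idem e" shows "idem (sinv p * e * p)"
proof -
  have "sinv p * e * p * (sinv p * e * p) = sinv p * (e * (p * sinv p)) * e * p" by (simp add: mult.assoc)
  also have "\<dots> = sinv p * ((p * sinv p) * e) * e * p" using idem_comm[OF e idem_r] by simp
  also have "\<dots> = (sinv p * p * sinv p) * (e * e) * p" by (simp add: mult.assoc)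
  also have "\<dots> = sinv p * e * p" using e sinv12 by (simp add: idem_def)
  finally show ?thesis unfolding idem_def .
qed

lemma f_idem: "idem x \<Longrightarrow> f x * f x = f x"
  unfolding idem_def by (metis hom)

lemma pure': "f x * f x = f x \<Longrightarrow> idem x"
  unfolding idem_def by (rule pure)

lemma eXe: "idem e \<Longrightarrow> idem X \<Longrightarrow> e * X * e = e * X"
proof -
  assume e: "idem e" and X: "idem X"
  have "e * X * e = e * (e * X)" using idem_comm[OF X e] by (simp add: mult.assoc)
  also have "\<dots> = e * X" using idem'[OF e] .
  finally show ?thesis .
qed

lemma r_e: "idem e \<Longrightarrow> (e*z)*sinv(e*z) = e*(z*sinv z)"
proof -
  assume e: "idem e"
  have "(e*z)*sinv(e*z) = e*(z*sinv z)*e" by (simp add: sinv_mult idem_sinv[OF e] mult.assoc)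
  also have "\<dots> = e*(z*sinv z)" using eXe[OF e idem_r] .
  finally show ?thesis .
qed

lemma le_r: "((x::'a)*c)*sinv(x*c) * (x * sinv x) = (x*c)*sinv(x*c)"
  by (simp add: sinv_mult mult.assoc sinv2)

definition eps :: "'a \<Rightarrow> nat \<Rightarrow> 'a" where
  "eps p i = p * gs!i * sinv (gs!i) * sinv p"

lemma eps_r: "eps p i = (p * gs!i) * sinv (p * gs!i)"
  unfolding eps_def by (simp add: sinv_mult mult.assoc)

definition S :: "'a \<Rightarrow> ('b \<times> nat) set" where
  "S e = {(f p, i) | p i. i < length gs \<and> e * eps p i = e}"

lemma S_anti: assumes "e1 * e2 = e1" shows "S e2 \<subseteq> S e1"
proof
  fix z assume "z \<in> S e2"
  then obtain p i where z: "z = (f p, i)" "i < length gs" "e2 * eps p i = e2" unfolding S_def by blast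
  have "e1 * eps p i = e1 * (e2 * eps p i)" using assms by (simp add: mult.assoc[symmetric])
  also have "\<dots> = e1" using z assms by simp
  finally show "z \<in> S e1" unfolding S_def using z by blast
qed

lemma S_mem: "z \<in> S e \<Longrightarrow> \<exists>p i. z = (f p, i) \<and> i < length gs \<and> e * eps p i = e"
  unfolding S_def by blast

lemma S_memI: "i < length gs \<Longrightarrow> e * eps p i = e \<Longrightarrow> (f p, i) \<in> S e"
  unfolding S_def by blast

lemma fwd:
  assumes e: "idem e" and ep: "e * (p * sinv p) = e" and i: "i < length gs"
    and q: "f q = f p" "e * eps q i = e"
  shows "e * ((p*gs!i) * sinv (p*gs!i)) = e"
proof -
  define a where "a = gs!i"
  have "e * (q * sinv q) = e * eps q i * (q * sinv q)" using q by simp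
  also have "\<dots> = e * eps q i" using le_r[of q a] unfolding eps_r a_def by (simp add: mult.assoc)
  also have "\<dots> = e" using q by simp
  finally have eq: "e * (q * sinv q) = e" .
  have sp: "sinv (e*p) = sinv p * e" by (simp add: sinv_mult idem_sinv[OF e])
  have "f (sinv p * e * q) = f (sinv p * e) * f q" by (simp add: hom)
  also have "\<dots> = f (sinv p * e * p)" using q by (simp add: hom mult.assoc)
  finally have "idem (sinv p * e * q)" using f_idem[OF idem_conj[OF e, of p]] pure' by metis
  hence c1: "idem (sinv (e*p) * (e*q))" using sp idem'[OF e] by (simp add: mult.assoc)
  have c2: "(e*p) * sinv (e*p) = (e*q) * sinv (e*q)"
    using r_e[OF e, of p] r_e[OF e, of q] ep eq by simp
  have epq: "e*p = e*q" using compat[OF c1 c2] .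
  have "e * ((p*a) * sinv (p*a)) = (e*p*a) * sinv (e*p*a)" using r_e[OF e, of "p*a"] by (simp add: mult.assoc)
  also have "\<dots> = (e*q*a) * sinv (e*q*a)" using epq by simp
  also have "\<dots> = e * eps q i" using r_e[OF e, of "q*a"] unfolding eps_r a_def by (simp add: mult.assoc)
  also have "\<dots> = e" using q by simp
  finally show ?thesis unfolding a_def .
qed

lemma inv_step:
  assumes e: "idem e" and ep: "e * (p * sinv p) = e" and i: "i < length gs"
    and q: "f q = f (p * sinv (gs!i))" "e * eps q i = e"
  shows "e * ((p*sinv (gs!i)) * sinv (p*sinv (gs!i))) = e"
proof -
  define a where "a = gs!i"
  have sp: "sinv (e*p) = sinv p * e" by (simp add: sinv_mult idem_sinv[OF e])
  have "f (sinv p * e * q * a) = f (sinv p * e) * f q * f a" by (simp add: hom)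
  also have "\<dots> = f (sinv p * e * p * (sinv a * a))" using q a_def by (simp add: hom mult.assoc)
  finally have "idem (sinv p * e * q * a)"
    using f_idem[OF idem_mult[OF idem_conj[OF e, of p] idem_l[of a]]] pure' by metis
  hence c1: "idem (sinv (e*p) * (e*q*a))" using sp idem'[OF e] by (simp add: mult.assoc)
  have "(e*q*a) * sinv (e*q*a) = e * eps q i" using r_e[OF e, of "q*a"] unfolding eps_r a_def by (simp add: mult.assoc)
  hence c2: "(e*p) * sinv (e*p) = (e*q*a) * sinv (e*q*a)"
    using r_e[OF e, of p] ep q by simp
  have epq: "e*p = e*q*a" using compat[OF c1 c2] .
  have aa: "idem (a * sinv a)" by (rule idem_r)
  have "e * ((p*sinv a) * sinv (p*sinv a)) = (e*p*sinv a) * sinv (e*p*sinv a)" using r_e[OF e, of "p*sinv a"] by (simp add: mult.assoc)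
  also have "\<dots> = (e*(q*(a*sinv a))) * sinv (e*(q*(a*sinv a)))" using epq by (simp add: mult.assoc)
  also have "\<dots> = e * (q*(a*sinv a) * sinv (q*(a*sinv a)))" using r_e[OF e] by simp
  also have "q*(a*sinv a) * sinv (q*(a*sinv a)) = q*((a*sinv a)*(a*sinv a))*sinv q"
    by (simp add: sinv_mult idem_sinv[OF aa] sinv_sinv mult.assoc)
  also have "\<dots> = eps q i" using aa unfolding idem_def eps_def a_def by (simp add: mult.assoc)
  also have "e * eps q i = e" using q by simp
  finally show ?thesis unfolding a_def .
qed

lemma eps_self: "i < length gs \<Longrightarrow> eps (gs!i * sinv (gs!i)) i = gs!i * sinv (gs!i)"
proof -
  assume "i < length gs"
  have aa: "idem (gs!i * sinv (gs!i))" by (rule idem_r)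
  show ?thesis unfolding eps_def idem_sinv[OF aa] using aa unfolding idem_def by (simp add: mult.assoc)
qed

lemma eps_inv: "eps (sinv (gs!i)) i = sinv (gs!i) * gs!i"
  unfolding eps_def sinv_sinv by (simp add: mult.assoc sinv2')

lemma base1:
  assumes e: "idem e" and i: "i < length gs" and sub: "S (gs!i * sinv (gs!i)) \<subseteq> S e"
  shows "e * (gs!i * sinv (gs!i)) = e"
proof -
  define a where "a = gs!i"
  have aa: "idem (a * sinv a)" by (rule idem_r)
  have "(f (a * sinv a), i) \<in> S (a * sinv a)"
    by (rule S_memI[OF i]) (use eps_self[OF i] aa in \<open>simp add: a_def idem_def\<close>)
  hence "(f (a * sinv a), i) \<in> S e" using sub a_def by auto
  then obtain q where q: "f q = f (a * sinv a)" "e * eps q i = e" by (auto dest!: S_mem)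
  have qi: "idem q" using q(1) f_idem[OF aa] pure' by metis
  have "eps q i = q * (a * sinv a) * q" unfolding eps_def a_def idem_sinv[OF qi] by (simp add: mult.assoc)
  also have "\<dots> = q * (a * sinv a)" using eXe[OF qi aa] .
  finally have eq: "eps q i = q * (a * sinv a)" .
  have "e * (a * sinv a) = e * eps q i * (a * sinv a)" using q by simp
  also have "\<dots> = e * eps q i" using eq aa unfolding idem_def by (simp add: mult.assoc)
  also have "\<dots> = e" using q by simp
  finally show ?thesis unfolding a_def .
qed

lemma base2:
  assumes e: "idem e" and i: "i < length gs" and sub: "S (sinv (gs!i) * sinv (sinv (gs!i))) \<subseteq> S e"
  shows "e * (sinv (gs!i) * sinv (sinv (gs!i))) = e"
proof -
  define a where "a = gs!i"
  have "(f (sinv a), i) \<in> S (sinv a * a)"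
    by (rule S_memI[OF i]) (use eps_inv[of i] idem_l[of a] in \<open>simp add: a_def idem_def\<close>)
  hence "(f (sinv a), i) \<in> S e" using sub a_def by (auto simp: sinv_sinv)
  then obtain q where q: "f q = f (sinv a)" "e * eps q i = e" by (auto dest!: S_mem)
  have "f (e*q*a) = f (e * (sinv a * a))" using q by (simp add: hom mult.assoc)
  hence ti: "idem (e*q*a)" using f_idem[OF idem_mult[OF e idem_l]] pure' by metis
  have "(e*q*a) * sinv (e*q*a) = e * eps q i" using r_e[OF e, of "q*a"] unfolding eps_r a_def by (simp add: mult.assoc)
  hence "(e*q*a) * sinv (e*q*a) = e" using q by simp
  hence t: "e*q*a = e" using ti idem_sinv[OF ti] unfolding idem_def by simp
  have "e * (sinv a * a) = (e*q*a)*(sinv a * a)" using t by simp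
  also have "\<dots> = e*q*(a*(sinv a * a))" by (simp add: mult.assoc)
  also have "\<dots> = e" using t sinv1 by (simp add: mult.assoc)
  finally show ?thesis unfolding a_def sinv_sinv .
qed

lemma eps_rep: "x \<in> wds gs \<Longrightarrow> \<exists>p i. i < length gs \<and> x * sinv x = eps p i"
proof (induction rule: wds.induct)
  case (l1 i) then show ?case using eps_self by metis
next
  case (l2 i) then show ?case using eps_inv by (metis sinv_sinv)
next
  case (s1 x i) then show ?case using eps_r by metis
next
  case (s2 x i)
  define a where "a = gs!i"
  have "eps (x * sinv a) i = (x * sinv a * a) * sinv (x * sinv a * a)" unfolding eps_r a_def ..
  also have "\<dots> = x * (sinv a * a * sinv a) * a * sinv x"
    by (simp add: sinv_mult idem_sinv[OF idem_l] sinv_sinv mult.assoc)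
  also have "\<dots> = (x * sinv a) * sinv (x * sinv a)" using sinv12 by (simp add: sinv_mult sinv_sinv mult.assoc)
  finally show ?case using s2 a_def by metis
qed

lemma S_self: "x \<in> wds gs \<Longrightarrow> S (x * sinv x) \<noteq> {}"
proof -
  assume "x \<in> wds gs"
  then obtain p i where "i < length gs" "x * sinv x = eps p i" using eps_rep by blast
  hence "(f p, i) \<in> S (x * sinv x)" using idem_r[of x] by (intro S_memI) (auto simp: idem_def)
  thus ?thesis by blast
qed

lemma main: "x \<in> wds gs \<Longrightarrow> idem e \<Longrightarrow> S (x * sinv x) \<subseteq> S e \<Longrightarrow> e * (x * sinv x) = e"
proof (induction arbitrary: e rule: wds.induct)
  case (l1 i) then show ?case using base1 by blast
next
  case (l2 i) then show ?case using base2 by blast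
next
  case (s1 x i)
  have "S (x * sinv x) \<subseteq> S ((x*gs!i) * sinv (x*gs!i))" by (rule S_anti[OF le_r])
  hence ex: "e * (x * sinv x) = e" using s1 by blast
  have "(f x, i) \<in> S ((x*gs!i) * sinv (x*gs!i))"
    using s1(2) idem_r[of "x*gs!i"] by (intro S_memI) (auto simp: idem_def eps_r)
  hence "(f x, i) \<in> S e" using s1.prems(2) by blast
  then obtain q where q: "f q = f x" "e * eps q i = e" by (auto dest!: S_mem)
  show ?case using fwd[OF s1(4) ex s1(2) q] .
next
  case (s2 x i)
  have "S (x * sinv x) \<subseteq> S ((x*sinv (gs!i)) * sinv (x*sinv (gs!i)))" by (rule S_anti[OF le_r])
  hence ex: "e * (x * sinv x) = e" using s2 by blast
  obtain p j where pj: "j < length gs" "(x*sinv (gs!i)) * sinv (x*sinv (gs!i)) = eps p j"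
    using eps_rep[OF wds.s2[OF s2(1) s2(2)]] by blast
  have "eps (x * sinv (gs!i)) i = (x*sinv (gs!i)) * sinv (x*sinv (gs!i))"
  proof -
    define a where "a = gs!i"
    have "eps (x * sinv a) i = (x * sinv a * a) * sinv (x * sinv a * a)" unfolding eps_r a_def ..
    also have "\<dots> = x * (sinv a * a * sinv a) * a * sinv x"
      by (simp add: sinv_mult idem_sinv[OF idem_l] sinv_sinv mult.assoc)
    also have "\<dots> = (x * sinv a) * sinv (x * sinv a)" using sinv12 by (simp add: sinv_mult sinv_sinv mult.assoc)
    finally show ?thesis unfolding a_def .
  qed
  hence "(f (x * sinv (gs!i)), i) \<in> S ((x*sinv (gs!i)) * sinv (x*sinv (gs!i)))"
    using s2(2) idem_r[of "x*sinv (gs!i)"] by (intro S_memI) (auto simp: idem_def)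
  hence "(f (x * sinv (gs!i)), i) \<in> S e" using s2.prems(2) by blast
  then obtain q where q: "f q = f (x * sinv (gs!i))" "e * eps q i = e" by (auto dest!: S_mem)
  show ?case using inv_step[OF s2(4) ex s2(2) q] .
qed

lemma inj_main:
  assumes x: "x \<in> wds gs" and y: "y \<in> wds gs" and fxy: "f x = f y"
    and S: "S (x * sinv x) = S (y * sinv y)"
  shows "x = y"
proof -
  have 1: "(y * sinv y) * (x * sinv x) = y * sinv y" using main[OF x idem_r] S by simp
  have 2: "(x * sinv x) * (y * sinv y) = x * sinv x" using main[OF y idem_r] S by simp
  have r: "x * sinv x = y * sinv y" using 1 2 idem_comm[OF idem_r idem_r, of x y] by simp
  have "f (sinv x * y) = f (sinv x * x)" using fxy by (simp add: hom)
  hence "idem (sinv x * y)" using f_idem[OF idem_l] pure' by metis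
  thus ?thesis using compat r by blast
qed

end

lemma wds_mult: "y \<in> wds gs \<Longrightarrow> x \<in> wds gs \<Longrightarrow> x * y \<in> wds gs"
proof (induction y rule: wds.induct)
  case (l1 i) then show ?case by (simp add: wds.s1)
next
  case (l2 i) then show ?case by (simp add: wds.s2)
next
  case (s1 y i) then show ?case using wds.s1 by (metis mult.assoc)
next
  case (s2 y i) then show ?case using wds.s2 by (metis mult.assoc)
qed

context setting begin

lemma wds_sinv: "x \<in> wds gs \<Longrightarrow> sinv x \<in> wds gs"
proof (induction x rule: wds.induct)
  case (l1 i) then show ?case by (rule wds.l2)
next
  case (l2 i) then show ?case by (simp add: sinv_sinv wds.l1)
next
  case (s1 x i) then show ?case by (simp add: sinv_mult wds_mult wds.l2)
next
  case (s2 x i) then show ?case by (simp add: sinv_mult sinv_sinv wds_mult wds.l1)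
qed

lemma inv_gen_wds: "x \<in> inv_gen (set gs) \<Longrightarrow> x \<in> wds gs"
proof (induction rule: inv_gen.induct)
  case (gen x) then show ?case by (metis in_set_conv_nth wds.l1)
next
  case (inv x) then show ?case by (simp add: wds_sinv)
next
  case (mult x y) then show ?case by (simp add: wds_mult)
qed

end

theorem corollary3:
  fixes f :: "'a::semigroup_mult \<Rightarrow> 'b::{finite, semigroup_mult}"
    and k n :: nat
  assumes "is_inverse_semigroup TYPE('a)"
    and "\<exists>gs :: 'a list. length gs = k \<and> inv_gen (set gs) = UNIV"
    and "semigroup_hom f" and "surj f" and "idempotent_pure f"
    and "card (UNIV :: 'b set) = n"
  shows "finite (UNIV :: 'a set) \<and> card (UNIV :: 'a set) \<le> n * (2 ^ (k * n) - 1)"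
proof -
  obtain gs :: "'a list" where gs: "length gs = k" "inv_gen (set gs) = UNIV" using assms(2) by blast
  interpret setting f gs
    using assms(1,3,5) unfolding is_inverse_semigroup_def semigroup_hom_def idempotent_pure_def
    by unfold_locales auto
  have W: "x \<in> wds gs" for x using inv_gen_wds gs(2) by blast
  define g where "g x = (f x, S (x * sinv x))" for x
  define A where "A = (UNIV :: 'b set) \<times> {..<k}"
  have inj: "inj g" unfolding inj_def g_def using inj_main W by blast
  have img: "range g \<subseteq> UNIV \<times> (Pow A - {{}})"
  proof
    fix z assume "z \<in> range g"
    then obtain x where z: "z = g x" by blast
    have "S (x * sinv x) \<subseteq> A" unfolding S_def A_def using gs(1) by auto
    moreover have "S (x * sinv x) \<noteq> {}" using S_self W by blast
    ultimately show "z \<in> UNIV \<times> (Pow A - {{}})" unfolding z g_def by auto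
  qed
  have finA: "finite A" unfolding A_def by simp
  have finB: "finite (UNIV \<times> (Pow A - {{}}) :: ('b \<times> ('b \<times> nat) set) set)" using finA by simp
  have cA: "card A = n * k" unfolding A_def using assms(6) by (simp add: card_cartesian_product)
  have cB: "card (UNIV \<times> (Pow A - {{}}) :: ('b \<times> ('b \<times> nat) set) set) = n * (2 ^ (k * n) - 1)"
    using finA cA assms(6) by (simp add: card_cartesian_product card_Diff_singleton card_Pow mult.commute)
  have fin: "finite (UNIV :: 'a set)"
    using finite_subset[OF img finB] inj by (simp add: finite_image_iff)
  have "card (UNIV :: 'a set) = card (range g)" using inj by (simp add: card_image)
  also have "\<dots> \<le> n * (2 ^ (k * n) - 1)" using card_mono[OF finB img] cB by simp
  finally show ?thesis using fin by simp
qed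

end
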